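(* Let $n\ge1$, $b\ge1$. For $0\le i,j\le n$: (1) the transition probabilities of the type $B$ base-$(2b+1)$ carries chain are $$P(i,j)=\frac1{(2b+1)^n}\sum_{l\ge0}(-1)^l\binom{n+1}{l}\binom{n+(j-l)(2b+1)+b-i}{n};$$ (2) its $r$-step transition probabilities ($r\ge1$) are $$P^r(i,j)=\frac1{(2b+1)^{rn}}\sum_{l\ge0}(-1)^l\binom{n+1}{l}\binom{n+(j-l)(2b+1)^r+\frac{(2b+1)^r-1}{2}-i}{n}.$$
   Context: Binomial convention: $\binom{m}{n}=\frac{m(m-1)\cdots(m-n+1)}{n!}$ if $m\ge n$ and $\binom{m}{n}=0$ if $m<n$ (including negative $m$). The type $B$ base-$(2b+1)$ carries chain (for $n$ summands) is the Markov chain $\kappa_0=0,\kappa_1,\dots$ on $\{0,1,\dots,n\}$ obtained by adding $n$ random base-$(2b+1)$ numbers with i.i.d. digits uniform on $\{0,1,\dots,2b\}$ together with the number all of whose digits equal $b$: $\kappa_{t+1}=\lfloor(\kappa_t+b+X_{t+1,1}+\dots+X_{t+1,n})/(2b+1)\rfloor$ with $X_{t,k}$ i.i.d. uniform on $\{0,\dots,2b\}$. *)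

theory Defs
  imports Complex_Main "HOL-Library.FuncSet"
begin

text \<open>Binomial with integer upper argument: m(m-1)...(m-k+1)/k! if m >= k, and 0 if m < k
  (including negative m).\<close>
definition binomz :: "int \<Rightarrow> nat \<Rightarrow> int" where
  "binomz m k = (if m < int k then 0 else int (nat m choose k))"

text \<open>One-step transition probability of the type B base-(2b+1) carries chain with n summands:
  the probability, for digits X_1..X_n i.i.d. uniform on {0..2b}, that
  floor((i + b + X_1 + ... + X_n)/(2b+1)) = j.\<close>
definition carriesB_P :: "nat \<Rightarrow> nat \<Rightarrow> nat \<Rightarrow> nat \<Rightarrow> real" where
  "carriesB_P b n i j =
     real (card {x \<in> {..<n} \<rightarrow>\<^sub>E {0..2*b}.
                   (i + b + (\<Sum>k<n. x k)) div (2*b+1) = j}) / real ((2*b+1)^n)"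

fun carriesB_Pr :: "nat \<Rightarrow> nat \<Rightarrow> nat \<Rightarrow> nat \<Rightarrow> nat \<Rightarrow> real" where
  "carriesB_Pr b n 0 i j = (if i = j then 1 else 0)"
| "carriesB_Pr b n (Suc r) i j = (\<Sum>k=0..n. carriesB_Pr b n r i k * carriesB_P b n k j)"

end

theory Submission
  imports Defs
begin

lemma binomz_pascal: "binomz (v + 1) (Suc k) = binomz v (Suc k) + binomz v k"
proof (cases "v < int k")
  case True then show ?thesis by (simp add: binomz_def)
next
  case False
  define w where "w = nat v"
  have v: "v = int w" "k \<le> w" using False by (auto simp: w_def)
  show ?thesis
  proof (cases "w = k")
    case True then show ?thesis using v by (simp add: binomz_def nat_add_distrib)
  next
    case False
    then have "Suc k \<le> w" using v by simp
    then show ?thesis using v by (simp add: binomz_def nat_add_distrib)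
  qed
qed

lemma hockey: "(\<Sum>a<M. binomz (u - int a) k) = binomz (u+1) (Suc k) - binomz (u + 1 - int M) (Suc k)"
proof (induction M)
  case 0 then show ?case by simp
next
  case (Suc M)
  have "binomz (u - int M + 1) (Suc k) = binomz (u - int M) (Suc k) + binomz (u - int M) k"
    by (rule binomz_pascal)
  moreover have "u - int M + 1 = u + 1 - int M" by simp
  ultimately show ?case using Suc by simp
qed

lemma altsum:
  fixes g :: "nat \<Rightarrow> int"
  shows "(\<Sum>l=0..n. (-1)^l * int (n choose l) * (g l - g (Suc l)))
       = (\<Sum>l=0..Suc n. (-1)^l * int (Suc n choose l) * g l)"
proof -
  have A: "(\<Sum>l=0..n. (-1)^l * int (n choose l) * g l)
      = g 0 - (\<Sum>l=0..n. (-1)^l * int (n choose Suc l) * g (Suc l))"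
  proof -
    have "(\<Sum>l=0..Suc n. (-1)^l * int (n choose l) * g l)
        = (\<Sum>l=0..n. (-1)^l * int (n choose l) * g l)"
      by (simp add: sum.atLeast0_atMost_Suc)
    moreover have "(\<Sum>l=0..Suc n. (-1)^l * int (n choose l) * g l)
        = g 0 + (\<Sum>l=0..n. (-1)^(Suc l) * int (n choose Suc l) * g (Suc l))"
      by (subst sum.atLeast0_atMost_Suc_shift) simp
    moreover have "(\<Sum>l=0..n. (-1)^(Suc l) * int (n choose Suc l) * g (Suc l))
       = - (\<Sum>l=0..n. (-1)^l * int (n choose Suc l) * g (Suc l))"
      by (simp add: sum_negf[symmetric])
    ultimately show ?thesis by (simp add: binomial_eq_0)
  qed
  have "(\<Sum>l=0..Suc n. (-1)^l * int (Suc n choose l) * g l)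
      = g 0 + (\<Sum>l=0..n. (-1)^(Suc l) * int (Suc n choose Suc l) * g (Suc l))"
    by (subst sum.atLeast0_atMost_Suc_shift) simp
  also have "\<dots> = g 0 - (\<Sum>l=0..n. (-1)^l * int (n choose l) * g (Suc l))
                  - (\<Sum>l=0..n. (-1)^l * int (n choose Suc l) * g (Suc l))"
    by (simp add: sum_subtractf[symmetric] sum_negf[symmetric] algebra_simps sum.distrib[symmetric])
  finally show ?thesis using A
    by (simp add: sum_subtractf algebra_simps)
qed

lemma card_filter_sum: "finite X \<Longrightarrow> card {x\<in>X. Q x} = (\<Sum>x\<in>X. if Q x then 1 else 0)"
  by (simp add: sum.inter_filter[symmetric])

lemma count_step:
  "card {x \<in> {..<Suc n} \<rightarrow>\<^sub>E {0..<M}. int (\<Sum>k<Suc n. x k) \<le> t}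
   = (\<Sum>a<M. card {x \<in> {..<n} \<rightarrow>\<^sub>E {0..<M}. int (\<Sum>k<n. x k) \<le> t - int a})"
proof -
  let ?S = "{..<n} \<rightarrow>\<^sub>E {0..<M::nat}"
  let ?h = "\<lambda>(y, g). (g(n := y)) :: nat \<Rightarrow> nat"
  let ?Q = "\<lambda>x::nat\<Rightarrow>nat. int (\<Sum>k<Suc n. x k) \<le> t"
  have eq: "{..<Suc n} \<rightarrow>\<^sub>E {0..<M} = ?h ` ({0..<M} \<times> ?S)"
    unfolding lessThan_Suc by (rule PiE_insert_eq)
  have inj: "inj_on ?h ({0..<M} \<times> ?S)"
    using inj_combinator[of n "{..<n}" "\<lambda>_. {0..<M}"] by simp
  have "card {x \<in> {..<Suc n} \<rightarrow>\<^sub>E {0..<M}. ?Q x}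
      = (\<Sum>x\<in>{..<Suc n} \<rightarrow>\<^sub>E {0..<M}. if ?Q x then 1 else 0)"
    by (rule card_filter_sum) (simp add: finite_PiE)
  also have "\<dots> = (\<Sum>p\<in>{0..<M} \<times> ?S. if ?Q (?h p) then 1 else 0)"
    unfolding eq by (subst sum.reindex[OF inj]) (simp add: comp_def)
  also have "\<dots> = (\<Sum>a\<in>{0..<M}. \<Sum>g\<in>?S. if ?Q (g(n:=a)) then 1 else 0)"
    by (subst sum.cartesian_product) (rule sum.cong, simp, simp split: prod.split)
  also have "\<dots> = (\<Sum>a\<in>{0..<M}. \<Sum>g\<in>?S. if int (\<Sum>k<n. g k) \<le> t - int a then 1 else 0)"
    by (intro sum.cong refl) (simp add: algebra_simps)
  also have "\<dots> = (\<Sum>a<M. card {x \<in> ?S. int (\<Sum>k<n. x k) \<le> t - int a})"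
    by (intro sum.cong) (auto simp: card_filter_sum finite_PiE)
  finally show ?thesis .
qed

lemma count_le:
  "int (card {x \<in> {..<n} \<rightarrow>\<^sub>E {0..<M}. int (\<Sum>k<n. x k) \<le> t})
    = (\<Sum>l=0..n. (-1)^l * int (n choose l) * binomz (t - int l * int M + int n) n)"
proof (induction n arbitrary: t)
  case 0
  then show ?case by (simp add: binomz_def)
next
  case (Suc n)
  define g where "g l = binomz (t - int l * int M + int (Suc n)) (Suc n)" for l
  have "int (card {x \<in> {..<Suc n} \<rightarrow>\<^sub>E {0..<M}. int (\<Sum>k<Suc n. x k) \<le> t})
      = (\<Sum>a<M. int (card {x \<in> {..<n} \<rightarrow>\<^sub>E {0..<M}. int (\<Sum>k<n. x k) \<le> t - int a}))"
    by (subst count_step) (simp only: of_nat_sum)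
  also have "\<dots> = (\<Sum>a<M. \<Sum>l=0..n. (-1)^l * int (n choose l) * binomz (t - int a - int l * int M + int n) n)"
    using Suc by simp
  also have "\<dots> = (\<Sum>l=0..n. \<Sum>a<M. (-1)^l * int (n choose l) * binomz ((t - int l * int M + int n) - int a) n)"
    by (subst sum.swap) (simp add: algebra_simps)
  also have "\<dots> = (\<Sum>l=0..n. (-1)^l * int (n choose l) * (\<Sum>a<M. binomz ((t - int l * int M + int n) - int a) n))"
    by (simp add: sum_distrib_left)
  also have "\<dots> = (\<Sum>l=0..n. (-1)^l * int (n choose l) * (g l - g (Suc l)))"
    by (intro sum.cong refl) (subst hockey, simp add: g_def algebra_simps)
  also have "\<dots> = (\<Sum>l=0..Suc n. (-1)^l * int (Suc n choose l) * g l)"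
    by (rule altsum)
  finally show ?case by (simp add: g_def)
qed

lemma div_iff_nat: "(M::nat) > 0 \<Longrightarrow> (a div M = j) \<longleftrightarrow> (j*M \<le> a \<and> a < Suc j * M)"
  by (meson div_less_iff_less_mult div_times_less_eq_dividend le_less_Suc_eq
    less_eq_div_iff_mult_less_eq)

definition Ncnt :: "nat \<Rightarrow> nat \<Rightarrow> nat \<Rightarrow> nat \<Rightarrow> nat \<Rightarrow> nat" where
  "Ncnt n M B i j = card {x \<in> {..<n} \<rightarrow>\<^sub>E {0..<M}. (i + B + (\<Sum>k<n. x k)) div M = j}"

lemma gen:
  assumes "M \<ge> 1"
  shows "int (Ncnt n M B i j) = (\<Sum>l=0..Suc n. (-1)^l * int (Suc n choose l) *
            binomz (int n + (int j - int l) * int M + int M - 1 - int B - int i) n)"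
proof -
  let ?S = "{..<n} \<rightarrow>\<^sub>E {0..<M}"
  define t1 where "t1 = int j * int M + int M - 1 - int B - int i"
  define t0 where "t0 = t1 - int M"
  have fin: "finite ?S" by (simp add: finite_PiE)
  have seteq: "{x \<in> ?S. (i + B + (\<Sum>k<n. x k)) div M = j}
     = {x \<in> ?S. int (\<Sum>k<n. x k) \<le> t1} - {x \<in> ?S. int (\<Sum>k<n. x k) \<le> t0}"
  proof -
    have "(i + B + s) div M = j \<longleftrightarrow> int s \<le> t1 \<and> \<not> int s \<le> t0" for s
    proof -
      have "(i + B + s) div M = j \<longleftrightarrow> (j*M \<le> i + B + s \<and> i + B + s < Suc j * M)"
        using assms by (intro div_iff_nat) simp
      also have "\<dots> \<longleftrightarrow> int s \<le> t1 \<and> \<not> int s \<le> t0"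
      proof -
        have a: "Suc j * M = j*M + M" by simp
        have b: "int j * int M = int (j*M)" by simp
        show ?thesis unfolding t1_def t0_def b a by linarith
      qed
      finally show ?thesis .
    qed
    then show ?thesis by blast
  qed
  have sub: "{x \<in> ?S. int (\<Sum>k<n. x k) \<le> t0} \<subseteq> {x \<in> ?S. int (\<Sum>k<n. x k) \<le> t1}"
    unfolding t0_def by (intro Collect_mono) auto
  define g where "g l = binomz (t1 - int l * int M + int n) n" for l
  have "int (Ncnt n M B i j) = int (card {x \<in> ?S. int (\<Sum>k<n. x k) \<le> t1})
          - int (card {x \<in> ?S. int (\<Sum>k<n. x k) \<le> t0})"
    unfolding Ncnt_def seteq using sub fin
    by (simp add: card_Diff_subset finite_subset card_mono of_nat_diff)
  also have "\<dots> = (\<Sum>l=0..n. (-1)^l * int (n choose l) * g l) - (\<Sum>l=0..n. (-1)^l * int (n choose l) * g (Suc l))"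
  proof -
    have c1: "int (card {x \<in> ?S. int (\<Sum>k<n. x k) \<le> t1}) = (\<Sum>l=0..n. (-1)^l * int (n choose l) * g l)"
      unfolding g_def by (rule count_le)
    have c0: "int (card {x \<in> ?S. int (\<Sum>k<n. x k) \<le> t0}) = (\<Sum>l=0..n. (-1)^l * int (n choose l) * g (Suc l))"
      unfolding count_le g_def
      by (intro sum.cong refl arg_cong2[where f="(*)"] refl arg_cong2[where f=binomz]) (simp add: t0_def algebra_simps)
    show ?thesis using c0 c1 by simp
  qed
  also have "\<dots> = (\<Sum>l=0..n. (-1)^l * int (n choose l) * (g l - g (Suc l)))"
    by (simp only: sum_subtractf[symmetric] right_diff_distrib)
  also have "\<dots> = (\<Sum>l=0..Suc n. (-1)^l * int (Suc n choose l) * g l)"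
    by (rule altsum)
  also have "\<dots> = (\<Sum>l=0..Suc n. (-1)^l * int (Suc n choose l) *
            binomz (int n + (int j - int l) * int M + int M - 1 - int B - int i) n)"
    unfolding g_def t1_def by (intro sum.cong refl) (simp add: algebra_simps)
  finally show ?thesis .
qed

lemma digit_bound: "(a::nat) < M \<Longrightarrow> c < m \<Longrightarrow> a + M * c < M * m"
proof -
  assume "a < M" "c < m"
  then have "Suc c \<le> m" by simp
  then have "M * Suc c \<le> M * m" by (rule mult_le_mono2)
  then show ?thesis using \<open>a < M\<close> by simp
qed

lemma kbound:
  fixes M B i n :: nat
  assumes "M \<ge> 1" "B < M" "i \<le> n" "x \<in> {..<n} \<rightarrow>\<^sub>E {0..<M}"
  shows "(i + B + (\<Sum>k<n. x k)) div M \<le> n"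
proof -
  have "(\<Sum>k<n. x k) \<le> (\<Sum>k<n. M - 1)"
    using assms(1,4) by (intro sum_mono) (auto simp: PiE_def Pi_def)
  then have "(\<Sum>k<n. x k) \<le> n * (M - 1)" by simp
  moreover obtain M' where M': "M = Suc M'" using assms(1) by (cases M) auto
  ultimately have "i + B + (\<Sum>k<n. x k) < Suc n * M"
    using assms(2,3) by (simp add: algebra_simps)
  then show ?thesis using assms(1) by (simp add: less_Suc_eq_le[symmetric] div_less_iff_less_mult)
qed

lemma filter_image_eq: "{z \<in> f ` X. Q z} = f ` {p \<in> X. Q (f p)}"
  by auto

lemma comp:
  fixes M m B c i n j :: nat
  assumes M: "M \<ge> 1" and m: "m \<ge> 1" and B: "B < M" and i: "i \<le> n"
  shows "Ncnt n (M*m) (B + M*c) i j = (\<Sum>k=0..n. Ncnt n M B i k * Ncnt n m c k j)"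
proof -
  let ?A = "{..<n} \<rightarrow>\<^sub>E {0..<M}"
  let ?C = "{..<n} \<rightarrow>\<^sub>E {0..<m}"
  let ?D = "{..<n} \<rightarrow>\<^sub>E {0..<M*m}"
  define h where "h p = (\<lambda>k. if k < n then fst p k + M * snd p k else undefined)" for p :: "(nat \<Rightarrow> nat) \<times> (nat \<Rightarrow> nat)"
  define f where "f y = ((\<lambda>k. if k < n then y k mod M else undefined),
                         (\<lambda>k. if k < n then y k div M else undefined))" for y :: "nat \<Rightarrow> nat"
  define kx where "kx x = (i + B + (\<Sum>k<n. x k)) div M" for x :: "nat \<Rightarrow> nat"
  have finA: "finite ?A" and finC: "finite ?C" by (simp_all add: finite_PiE)
  have bij: "bij_betw h (?A \<times> ?C) ?D"
  proof (rule bij_betw_byWitness[where f'=f])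
    show "\<forall>p\<in>?A \<times> ?C. f (h p) = p"
    proof
      fix p assume p: "p \<in> ?A \<times> ?C"
      obtain x y where xy: "p = (x, y)" by (cases p)
      have x: "x \<in> ?A" and y: "y \<in> ?C" using p xy by auto
      have "(\<lambda>k. if k < n then (x k + M * y k) mod M else undefined) = x"
      proof
        fix k show "(if k < n then (x k + M * y k) mod M else undefined) = x k"
          using x by (auto simp: PiE_def Pi_def extensional_def)
      qed
      moreover have "(\<lambda>k. if k < n then (x k + M * y k) div M else undefined) = y"
      proof
        fix k show "(if k < n then (x k + M * y k) div M else undefined) = y k"
          using x y M by (auto simp: PiE_def Pi_def extensional_def)
      qed
      ultimately show "f (h p) = p" by (simp add: f_def h_def xy cong: if_cong)
    qed
    show "\<forall>z\<in>?D. h (f z) = z"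
    proof
      fix z assume z: "z \<in> ?D"
      show "h (f z) = z"
      proof
        fix k show "h (f z) k = z k"
          using z by (auto simp: h_def f_def PiE_def Pi_def extensional_def)
      qed
    qed
    show "h ` (?A \<times> ?C) \<subseteq> ?D"
      by (auto simp: h_def PiE_def Pi_def extensional_def intro!: digit_bound)
    show "f ` ?D \<subseteq> ?A \<times> ?C"
      using M by (auto simp: f_def PiE_def Pi_def extensional_def less_mult_imp_div_less mult.commute)
  qed
  have sumh: "(\<Sum>k<n. h p k) = (\<Sum>k<n. fst p k) + M * (\<Sum>k<n. snd p k)" for p
    by (simp add: h_def sum.distrib sum_distrib_left)
  have cond: "(i + (B + M*c) + (\<Sum>k<n. h p k)) div (M*m)
           = (kx (fst p) + c + (\<Sum>k<n. snd p k)) div m" for p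
  proof -
    have e: "i + (B + M*c) + (\<Sum>k<n. h p k) = (i + B + (\<Sum>k<n. fst p k)) + M * (c + (\<Sum>k<n. snd p k))"
      by (simp add: sumh algebra_simps)
    have "(i + (B + M*c) + (\<Sum>k<n. h p k)) div M = kx (fst p) + (c + (\<Sum>k<n. snd p k))"
      using M by (subst e) (simp add: kx_def)
    then show ?thesis by (simp only: div_mult2_eq add.assoc)
  qed
  have "Ncnt n (M*m) (B + M*c) i j = card {z \<in> ?D. (i + (B + M*c) + (\<Sum>k<n. z k)) div (M*m) = j}"
    by (simp add: Ncnt_def)
  also have "{z \<in> ?D. (i + (B + M*c) + (\<Sum>k<n. z k)) div (M*m) = j}
        = h ` {p \<in> ?A \<times> ?C. (i + (B + M*c) + (\<Sum>k<n. h p k)) div (M*m) = j}"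
  proof -
    have "?D = h ` (?A \<times> ?C)" using bij by (simp add: bij_betw_def)
    then show ?thesis by (simp only: filter_image_eq)
  qed
  also have "card \<dots> = card {p \<in> ?A \<times> ?C. (i + (B + M*c) + (\<Sum>k<n. h p k)) div (M*m) = j}"
    by (rule card_image[OF inj_on_subset[OF bij_betw_imp_inj_on[OF bij]]]) blast
  also have "\<dots> = card {p \<in> ?A \<times> ?C. (kx (fst p) + c + (\<Sum>k<n. snd p k)) div m = j}"
    by (simp only: cond)
  also have "\<dots> = (\<Sum>p\<in>?A \<times> ?C. if (kx (fst p) + c + (\<Sum>k<n. snd p k)) div m = j then 1 else 0)"
    using finA finC by (intro card_filter_sum) simp
  also have "\<dots> = (\<Sum>x\<in>?A. \<Sum>y\<in>?C. if (kx x + c + (\<Sum>k<n. y k)) div m = j then 1 else 0)"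
    by (subst sum.cartesian_product) (rule sum.cong, simp, simp split: prod.split)
  also have "\<dots> = (\<Sum>x\<in>?A. Ncnt n m c (kx x) j)"
    using finC by (intro sum.cong refl) (simp add: Ncnt_def card_filter_sum)
  also have "\<dots> = (\<Sum>x\<in>?A. \<Sum>k=0..n. if kx x = k then Ncnt n m c k j else 0)"
  proof (intro sum.cong refl)
    fix x assume "x \<in> ?A"
    then have "kx x \<in> {0..n}" using kbound[OF M B i] by (simp add: kx_def)
    then show "Ncnt n m c (kx x) j = (\<Sum>k=0..n. if kx x = k then Ncnt n m c k j else 0)"
      by (simp add: sum.delta)
  qed
  also have "\<dots> = (\<Sum>k=0..n. \<Sum>x\<in>?A. if kx x = k then Ncnt n m c k j else 0)"
    by (rule sum.swap)
  also have "\<dots> = (\<Sum>k=0..n. Ncnt n M B i k * Ncnt n m c k j)"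
  proof (intro sum.cong refl)
    fix k
    have "(\<Sum>x\<in>?A. if kx x = k then Ncnt n m c k j else 0) = (\<Sum>x\<in>{x\<in>?A. kx x = k}. Ncnt n m c k j)"
      using finA by (simp add: sum.inter_filter[symmetric])
    also have "\<dots> = Ncnt n M B i k * Ncnt n m c k j"
      by (simp add: Ncnt_def kx_def)
    finally show "(\<Sum>x\<in>?A. if kx x = k then Ncnt n m c k j else 0) = Ncnt n M B i k * Ncnt n m c k j" .
  qed
  finally show ?thesis .
qed

lemma P_eq: "carriesB_P b n i j = real (Ncnt n (2*b+1) b i j) / real ((2*b+1)^n)"
proof -
  have "{0..2*b} = {0..<2*b+1}" by auto
  then show ?thesis by (simp add: carriesB_P_def Ncnt_def)
qed

lemma Ncnt_one: "Ncnt n 1 0 i j = (if i = j then 1 else 0)"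
proof -
  let ?S = "{..<n} \<rightarrow>\<^sub>E {0..<1::nat}"
  have z: "(\<Sum>k<n. x k) = 0" if "x \<in> ?S" for x
    using that by (intro sum.neutral) (auto simp: PiE_def Pi_def)
  have "{x \<in> ?S. (i + 0 + (\<Sum>k<n. x k)) div 1 = j} = {x \<in> ?S. i = j}"
    using z by auto
  moreover have "card ?S = 1" by (simp add: card_PiE)
  ultimately show ?thesis by (simp add: Ncnt_def)
qed

lemma odd_half: "odd (M::nat) \<Longrightarrow> (M * (2*b+1) - 1) div 2 = (M - 1) div 2 + M * b"
  by (elim oddE) (simp add: algebra_simps)

lemma Pr_eq:
  assumes i: "i \<le> n"
  shows "carriesB_Pr b n r i j
     = real (Ncnt n ((2*b+1)^r) (((2*b+1)^r - 1) div 2) i j) / real ((2*b+1)^(r*n))"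
proof (induction r arbitrary: j)
  case 0
  then show ?case using Ncnt_one[of n i j] by simp
next
  case (Suc r)
  let ?m = "2*b+1" let ?M = "(2*b+1)^r"
  have oddM: "odd ?M" by simp
  have M1: "?M \<ge> 1" by simp
  have BM: "(?M - 1) div 2 < ?M" using M1 by (meson diff_less div_le_dividend le_less_trans zero_less_one less_le_trans)
  have "carriesB_Pr b n (Suc r) i j = (\<Sum>k=0..n. carriesB_Pr b n r i k * carriesB_P b n k j)"
    by simp
  also have "\<dots> = (\<Sum>k=0..n. real (Ncnt n ?M ((?M - 1) div 2) i k * Ncnt n ?m b k j)) / (real (?M^n) * real (?m^n))"
    by (simp add: Suc P_eq sum_divide_distrib power_mult)
  also have "(\<Sum>k=0..n. real (Ncnt n ?M ((?M - 1) div 2) i k * Ncnt n ?m b k j))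
       = real (Ncnt n (?M * ?m) ((?M - 1) div 2 + ?M * b) i j)"
    using comp[OF M1 _ BM i, of ?m b j] by simp
  also have "(?M - 1) div 2 + ?M * b = (?M * ?m - 1) div 2"
    using odd_half[OF oddM, of b] by simp
  also have "real (?M^n) * real (?m^n) = real (?m^(Suc r * n))"
  proof -
    have "?M^n * ?m^n = ?m^(Suc r * n)"
      by (simp only: power_mult[symmetric] power_add[symmetric] mult_Suc add.commute)
    then show ?thesis by (metis of_nat_mult)
  qed
  finally show ?case by (simp add: mult.commute)
qed

lemma real_gen:
  assumes "M \<ge> 1" and argeq: "\<And>l. int n + (int j - int l) * int M + int M - 1 - int B - int i = A l"
  shows "real (Ncnt n M B i j) = (\<Sum>l=0..n+1. (-1)^l * real (n+1 choose l) * of_int (binomz (A l) n))"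
proof -
  have "real (Ncnt n M B i j) = of_int (int (Ncnt n M B i j))" by simp
  also have "\<dots> = of_int (\<Sum>l=0..Suc n. (-1)^l * int (Suc n choose l) * binomz (A l) n)"
    using gen[OF assms(1), of n B i j] argeq by simp
  also have "\<dots> = (\<Sum>l=0..n+1. (-1)^l * real (n+1 choose l) * of_int (binomz (A l) n))"
    by simp
  finally show ?thesis .
qed

theorem theorem4p2:
  fixes n b i j :: nat
  assumes "n \<ge> 1" and "b \<ge> 1" and "i \<le> n" and "j \<le> n"
  shows "(carriesB_P b n i j =
           (1 / real ((2*b+1)^n)) *
           (\<Sum>l=0..n+1. (-1)^l * real (n+1 choose l) *
              of_int (binomz (int n + (int j - int l) * (2*int b+1) + int b - int i) n)))
       \<and> (\<forall>r\<ge>1. carriesB_Pr b n r i j =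
           (1 / real ((2*b+1)^(r*n))) *
           (\<Sum>l=0..n+1. (-1)^l * real (n+1 choose l) *
              of_int (binomz (int n + (int j - int l) * (2*int b+1)^r
                              + ((2*int b+1)^r - 1) div 2 - int i) n)))"
proof (intro conjI allI impI)
  have "real (Ncnt n (2*b+1) b i j) = (\<Sum>l=0..n+1. (-1)^l * real (n+1 choose l) *
              of_int (binomz (int n + (int j - int l) * (2*int b+1) + int b - int i) n))"
    by (rule real_gen) (simp_all add: algebra_simps)
  then show "carriesB_P b n i j =
           (1 / real ((2*b+1)^n)) *
           (\<Sum>l=0..n+1. (-1)^l * real (n+1 choose l) *
              of_int (binomz (int n + (int j - int l) * (2*int b+1) + int b - int i) n))"
    by (simp add: P_eq)
next
  fix r :: nat assume "r \<ge> 1"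
  define M where "M = (2*b+1)^r"
  have oddM: "odd M" by (simp add: M_def)
  then obtain q where q: "M = 2*q+1" by (elim oddE) 
  have iM: "int M = (2*int b+1)^r" by (simp add: M_def add.commute)
  have "real (Ncnt n M ((M - 1) div 2) i j) = (\<Sum>l=0..n+1. (-1)^l * real (n+1 choose l) *
              of_int (binomz (int n + (int j - int l) * (2*int b+1)^r
                              + ((2*int b+1)^r - 1) div 2 - int i) n))"
  proof (rule real_gen)
    show "M \<ge> 1" using q by simp
    fix l
    have "((2*int b+1)^r - 1) div 2 = int q" unfolding iM[symmetric] q by simp
    moreover have "(M - 1) div 2 = q" using q by simp
    ultimately show "int n + (int j - int l) * int M + int M - 1 - int ((M - 1) div 2) - int i
        = int n + (int j - int l) * (2*int b+1)^r + ((2*int b+1)^r - 1) div 2 - int i"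
      unfolding iM[symmetric] using q by simp
  qed
  then show "carriesB_Pr b n r i j =
           (1 / real ((2*b+1)^(r*n))) *
           (\<Sum>l=0..n+1. (-1)^l * real (n+1 choose l) *
              of_int (binomz (int n + (int j - int l) * (2*int b+1)^r
                              + ((2*int b+1)^r - 1) div 2 - int i) n))"
    using Pr_eq[OF assms(3), of b r j] by (simp add: M_def)
qed

end
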